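(* Let $\mathcal O$ be the suboperad of $\mathrm{CNCB}$ generated by $p:=T_{bbu}$ and $s:=T_{ubb}$. Then $\mathcal O$ admits the presentation with generators $p,s$ of arity $2$ and the single relation $$s\circ_1 p=p\circ_2 s.$$ That is, $\mathcal O$ is isomorphic, via the morphism sending the generators to $p$ and $s$, to the quotient of the free operad on two binary generators by the operadic congruence generated by this relation.
   Context: For $n\ge2$, a bicoloured noncrossing configuration (BNC) of size $n$ is a regular polygon with vertices $1,\dots,n+1$ clockwise, together with disjoint sets of blue and red arcs among the arcs $(i,j)$, $1\le i<j\le n+1$. The arcs $(i,i+1)$ are the edges ($i$th edge), $(1,n+1)$ is the base, and the others are diagonals. Coloured arcs are pairwise noncrossing ($(i,j),(k,l)$ cross iff $i<k<j<l$ or $k<i<l<j$), and red arcs are diagonals. There is one BNC of size $1$, a blue segment, which is the unit. The operad $\mathrm{CNCB}$ has the BNCs as elements (arity = size). Its composition $\mathfrak C\circ_i\mathfrak D$ ($\mathfrak C$ of size $n$, $\mathfrak D$ of size $m$) glues the base of $\mathfrak D$ on the $i$th edge of $\mathfrak C$. Arcs $(a,b)$ of $\mathfrak C$ become $(\sigma(a),\sigma(b))$ with $\sigma(v)=v$ for $v\le i$ and $v+m-1$ otherwise, and arcs $(a,b)$ of $\mathfrak D$ become $(a+i-1,b+i-1)$, keeping colours. The exception is the arc $(i,i+m)$, which is red if the $i$th edge of $\mathfrak C$ and the base of $\mathfrak D$ are both uncoloured, blue if both are blue, and uncoloured otherwise. For $x,y,z\in\{b,u\}$, $T_{xyz}$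 denotes the BNC of size $2$ (a triangle with vertices $1,2,3$) whose first edge $(1,2)$ has colour $x$, whose base $(1,3)$ has colour $y$, and whose second edge $(2,3)$ has colour $z$, where $b$ = blue and $u$ = uncoloured. The suboperad generated by a set is the smallest suboperad containing it. *)

theory Defs
  imports Main
begin

text \<open>A BNC is given by its size n and its sets of blue and red arcs; arcs are pairs
(i,j) of vertices with 1 <= i < j <= n+1.\<close>

datatype bnc = BNC (bsize: nat) (blue: "(nat \<times> nat) set") (red: "(nat \<times> nat) set")

definition is_arc :: "nat \<Rightarrow> nat \<times> nat \<Rightarrow> bool" where
  "is_arc n a \<longleftrightarrow> 1 \<le> fst a \<and> fst a < snd a \<and> snd a \<le> n + 1"

definition is_diagonal :: "nat \<Rightarrow> nat \<times> nat \<Rightarrow> bool" where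
  "is_diagonal n a \<longleftrightarrow> is_arc n a \<and> snd a \<noteq> fst a + 1 \<and> a \<noteq> (1, n + 1)"

definition crossing :: "nat \<times> nat \<Rightarrow> nat \<times> nat \<Rightarrow> bool" where
  "crossing a b \<longleftrightarrow> (case a of (i, j) \<Rightarrow> case b of (k, l) \<Rightarrow>
      (i < k \<and> k < j \<and> j < l) \<or> (k < i \<and> i < l \<and> l < j))"

definition unit_bnc :: bnc where
  "unit_bnc = BNC 1 {(1, 2)} {}"

definition wf_bnc :: "bnc \<Rightarrow> bool" where
  "wf_bnc C \<longleftrightarrow> C = unit_bnc \<or>
     (bsize C \<ge> 2 \<and> (\<forall>a \<in> blue C. is_arc (bsize C) a) \<and>
      (\<forall>a \<in> red C. is_diagonal (bsize C) a) \<and> blue C \<inter> red C = {} \<and>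
      (\<forall>a \<in> blue C \<union> red C. \<forall>b \<in> blue C \<union> red C. \<not> crossing a b))"

definition relabel :: "nat \<Rightarrow> nat \<Rightarrow> nat \<Rightarrow> nat" where
  "relabel i m v = (if v \<le> i then v else v + m - 1)"

definition shift :: "nat \<Rightarrow> nat \<times> nat \<Rightarrow> nat \<times> nat" where
  "shift i a = (fst a + i - 1, snd a + i - 1)"

text \<open>Partial composition C o_i D (gluing the base of D on the i-th edge of C).\<close>

definition bcomp :: "bnc \<Rightarrow> nat \<Rightarrow> bnc \<Rightarrow> bnc" where
  "bcomp C i D =
    (let n = bsize C; m = bsize D;
         sg = (\<lambda>a. (relabel i m (fst a), relabel i m (snd a)));
         e = (i, i + 1); bs = (1, m + 1);
         new = (i, i + m);
         eB = e \<in> blue C; eU = e \<notin> blue C \<and> e \<notin> red C;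
         bB = bs \<in> blue D; bU = bs \<notin> blue D \<and> bs \<notin> red D
     in BNC (n + m - 1)
        (sg ` (blue C - {e}) \<union> shift i ` (blue D - {bs}) \<union> (if eB \<and> bB then {new} else {}))
        (sg ` (red C - {e}) \<union> shift i ` (red D - {bs}) \<union> (if eU \<and> bU then {new} else {})))"

text \<open>T x y z: triangle with first edge colour x, base colour y, second edge colour z
  (True = blue, False = uncoloured).\<close>

definition T :: "bool \<Rightarrow> bool \<Rightarrow> bool \<Rightarrow> bnc" where
  "T x y z = BNC 2 ((if x then {(1, 2)} else {}) \<union> (if y then {(1, 3)} else {})
                     \<union> (if z then {(2, 3)} else {})) {}"

definition p_gen :: bnc where "p_gen = T True True False"
definition s_gen :: bnc where "s_gen = T False True True"

inductive_set gen_subop :: "bnc set \<Rightarrow> bnc set" for G where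
  gen_unit: "unit_bnc \<in> gen_subop G"
| gen_base: "C \<in> G \<Longrightarrow> C \<in> gen_subop G"
| gen_comp: "C \<in> gen_subop G \<Longrightarrow> D \<in> gen_subop G \<Longrightarrow> 1 \<le> i \<Longrightarrow> i \<le> bsize C
     \<Longrightarrow> bcomp C i D \<in> gen_subop G"

datatype gen = GP | GS

datatype ftree = Leaf | Node gen ftree ftree

fun arity :: "ftree \<Rightarrow> nat" where
  "arity Leaf = 1"
| "arity (Node g l r) = arity l + arity r"

fun tcomp :: "ftree \<Rightarrow> nat \<Rightarrow> ftree \<Rightarrow> ftree" where
  "tcomp Leaf i u = (if i = 1 then u else Leaf)"
| "tcomp (Node g l r) i u =
     (if i \<le> arity l then Node g (tcomp l i u) r else Node g l (tcomp r (i - arity l) u))"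

definition gtree :: "gen \<Rightarrow> ftree" where "gtree g = Node g Leaf Leaf"

inductive fcong :: "ftree \<Rightarrow> ftree \<Rightarrow> bool" where
  rel: "fcong (tcomp (gtree GS) 1 (gtree GP)) (tcomp (gtree GP) 2 (gtree GS))"
| refl: "fcong t t"
| sym: "fcong t u \<Longrightarrow> fcong u t"
| trans: "fcong t u \<Longrightarrow> fcong u v \<Longrightarrow> fcong t v"
| comp: "fcong t t' \<Longrightarrow> fcong u u' \<Longrightarrow> 1 \<le> i \<Longrightarrow> i \<le> arity t \<Longrightarrow>
           fcong (tcomp t i u) (tcomp t' i u')"

definition gen_val :: "gen \<Rightarrow> bnc" where
  "gen_val g = (case g of GP \<Rightarrow> p_gen | GS \<Rightarrow> s_gen)"

fun ev :: "ftree \<Rightarrow> bnc" where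
  "ev Leaf = unit_bnc"
| "ev (Node g l r) = bcomp (bcomp (gen_val g) 2 (ev r)) 1 (ev l)"

end

theory Submission
  imports Defs
begin


fun arcs :: "ftree \<Rightarrow> nat \<Rightarrow> bool \<Rightarrow> (nat \<times> nat) set" where
  "arcs Leaf off c = (if c then {(off, off + 1)} else {})"
| "arcs (Node g l r) off c = (if c then {(off, off + arity l + arity r)} else {})
     \<union> arcs l off (g = GP) \<union> arcs r (off + arity l) (g = GS)"

lemma arity_pos: "1 \<le> arity t"
  by (induction t) auto

lemma arcs_bounds: "a \<in> arcs t off c \<Longrightarrow> off \<le> fst a \<and> fst a < snd a \<and> snd a \<le> off + arity t"
proof (induction t arbitrary: off c)
  case Leaf then show ?case by (auto split: if_splits)
next
  case (Node g l r)
  then show ?case using arity_pos[of l] arity_pos[of r]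
    by (auto split: if_splits) (fastforce+)
qed

lemma arcs_noroot: "(off, off + arity t) \<notin> arcs t off False"
proof (cases t)
  case Leaf then show ?thesis by simp
next
  case (Node g l r)
  have "(off, off + arity l + arity r) \<notin> arcs l off (g = GP)"
    using arcs_bounds[of _ l off] arity_pos[of r] by fastforce
  moreover have "(off, off + arity l + arity r) \<notin> arcs r (off + arity l) (g = GS)"
    using arcs_bounds[of _ r "off + arity l"] arity_pos[of l] by fastforce
  ultimately show ?thesis using Node by (simp add: add.assoc)
qed

lemma arcs_split: "arcs t off c = (if c then {(off, off + arity t)} else {}) \<union> arcs t off False"
  by (cases t) auto

lemma arcs_trans: "(\<lambda>(a, b). (a + d, b + d)) ` arcs t off c = arcs t (off + d) c"
proof (induction t arbitrary: off c)
  case Leaf then show ?case by auto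
next
  case (Node g l r)
  have "(\<lambda>(a, b). (a + d, b + d)) ` arcs (Node g l r) off c =
     (\<lambda>(a, b). (a + d, b + d)) ` (if c then {(off, off + arity l + arity r)} else {})
     \<union> (\<lambda>(a, b). (a + d, b + d)) ` arcs l off (g = GP) \<union> (\<lambda>(a, b). (a + d, b + d)) ` arcs r (off + arity l) (g = GS)"
    by (simp add: image_Un)
  also have "\<dots> = arcs (Node g l r) (off + d) c"
    using Node.IH[of off "g = GP"] Node.IH(2)[of "off + arity l" "g = GS"]
    by (simp add: algebra_simps)
  finally show ?case .
qed

lemma arity_tcomp: "1 \<le> i \<Longrightarrow> i \<le> arity t \<Longrightarrow> arity (tcomp t i u) = arity t + arity u - 1"
proof (induction t arbitrary: i)
  case Leaf then show ?case by simp
next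
  case (Node g l r)
  then show ?case using arity_pos[of u] arity_pos[of l] by auto
qed


definition sgm :: "nat \<Rightarrow> nat \<Rightarrow> nat \<times> nat \<Rightarrow> nat \<times> nat" where
  "sgm k m = (\<lambda>a. (relabel k m (fst a), relabel k m (snd a)))"

lemma sgm_low: assumes h: "\<And>a b. (a, b) \<in> A \<Longrightarrow> b \<le> k \<and> a < b"
  shows "sgm k m ` A = A"
proof -
  have "\<And>x. x \<in> A \<Longrightarrow> sgm k m x = x"
  proof -
    fix x assume x: "x \<in> A"
    obtain a b where ab: "x = (a, b)" by (cases x)
    have "b \<le> k" "a < b" using h x ab by auto
    then show "sgm k m x = x" using ab by (simp add: sgm_def relabel_def)
  qed
  then show ?thesis by simp
qed

lemma sgm_high: assumes "1 \<le> m" "k < off"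
  shows "sgm k m ` arcs t off c = arcs t (off + (m - 1)) c"
proof -
  have "\<And>x. x \<in> arcs t off c \<Longrightarrow> sgm k m x = (\<lambda>(a, b). (a + (m - 1), b + (m - 1))) x"
  proof -
    fix x assume x: "x \<in> arcs t off c"
    obtain a b where ab: "x = (a, b)" by (cases x)
    have "off \<le> a" "a < b" using arcs_bounds[OF x] ab by auto
    then show "sgm k m x = (\<lambda>(a, b). (a + (m - 1), b + (m - 1))) x"
      using ab assms by (simp add: sgm_def relabel_def)
  qed
  then have "sgm k m ` arcs t off c = (\<lambda>(a, b). (a + (m - 1), b + (m - 1))) ` arcs t off c"
    by (rule image_cong[OF HOL.refl])
  then show ?thesis by (simp add: arcs_trans)
qed

lemma arcs_tcomp:
  "1 \<le> i \<Longrightarrow> i \<le> arity t \<Longrightarrow>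
   arcs (tcomp t i u) off c = sgm (off + i - 1) (arity u) ` (arcs t off c - {(off + i - 1, off + i)})
      \<union> arcs u (off + i - 1) ((off + i - 1, off + i) \<in> arcs t off c)"
proof (induction t arbitrary: i off c)
  case Leaf then show ?case by auto
next
  case (Node g l r)
  define m where "m = arity u"
  define al where "al = arity l"
  define ar where "ar = arity r"
  have m1: "1 \<le> m" and al1: "1 \<le> al" and ar1: "1 \<le> ar"
    using arity_pos m_def al_def ar_def by auto
  define k where "k = off + i - 1"
  define la where "la = (k, off + i)"
  define R where "R = (if c then {(off, off + al + ar)} else {})"
  have laR: "la \<notin> R" using Node.prems ar1 al1 unfolding R_def la_def k_def by auto
  have sgR: "sgm k m ` R = (if c then {(off, off + al + ar + (m - 1))} else {})"
    using Node.prems m1 unfolding R_def sgm_def relabel_def k_def al_def ar_def by auto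
  show ?case
  proof (cases "i \<le> al")
    case True
    have lar: "la \<notin> arcs r (off + al) (g = GS)"
    proof
      assume "la \<in> arcs r (off + al) (g = GS)"
      from arcs_bounds[OF this] have "off + al \<le> fst la" by simp
      with True Node.prems al1 show False unfolding la_def k_def by simp
    qed
    have sr: "sgm k m ` (arcs r (off + al) (g = GS) - {la}) = arcs r (off + al + (m - 1)) (g = GS)"
      using lar sgm_high[OF m1, of k "off + al" r] True Node.prems unfolding k_def by auto
    have ar_t: "arity (tcomp l i u) = al + (m - 1)"
      using arity_tcomp[of i l u] True Node.prems m1 unfolding al_def m_def by auto
    have "arcs (tcomp (Node g l r) i u) off c =
        (if c then {(off, off + al + ar + (m - 1))} else {}) \<union> arcs (tcomp l i u) off (g = GP)
        \<union> arcs r (off + al + (m - 1)) (g = GS)"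
      using True ar_t unfolding al_def ar_def by (simp add: algebra_simps)
    also have "\<dots> = sgm k m ` R \<union> (sgm k m ` (arcs l off (g = GP) - {la}) \<union> arcs u k (la \<in> arcs l off (g = GP)))
        \<union> sgm k m ` (arcs r (off + al) (g = GS) - {la})"
      using Node.IH(1)[of i off "g = GP"] True Node.prems sgR sr
      unfolding k_def la_def m_def al_def by simp
    also have "\<dots> = sgm k m ` (arcs (Node g l r) off c - {la}) \<union> arcs u k (la \<in> arcs (Node g l r) off c)"
      using laR lar unfolding R_def al_def ar_def by (auto simp: image_Un)
    finally show ?thesis unfolding k_def la_def m_def .
  next
    case False
    define j where "j = i - al"
    have j1: "1 \<le> j" and jr: "j \<le> arity r" using False Node.prems unfolding j_def al_def ar_def by auto
    have kj: "k = (off + al) + j - 1" and laj: "la = (off + al + j - 1, off + al + j)"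
      using False unfolding k_def j_def la_def by auto
    have lal: "la \<notin> arcs l off (g = GP)"
      using arcs_bounds[of la l off] False unfolding la_def k_def al_def by auto
    have sl: "sgm k m ` (arcs l off (g = GP) - {la}) = arcs l off (g = GP)"
    proof -
      have "arcs l off (g = GP) - {la} = arcs l off (g = GP)" using lal by simp
      moreover have "sgm k m ` arcs l off (g = GP) = arcs l off (g = GP)"
      proof (rule sgm_low)
        fix a b assume "(a, b) \<in> arcs l off (g = GP)"
        from arcs_bounds[OF this] show "b \<le> k \<and> a < b" using False unfolding k_def al_def by auto
      qed
      ultimately show ?thesis by simp
    qed
    have ar_t: "arity (tcomp r j u) = ar + (m - 1)"
      using arity_tcomp[of j r u] j1 jr m1 unfolding ar_def m_def by simp
    have "arcs (tcomp (Node g l r) i u) off c =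
        (if c then {(off, off + al + ar + (m - 1))} else {}) \<union> arcs l off (g = GP)
        \<union> arcs (tcomp r j u) (off + al) (g = GS)"
      using False ar_t unfolding al_def ar_def j_def by (simp add: algebra_simps)
    also have "\<dots> = sgm k m ` R \<union> sgm k m ` (arcs l off (g = GP) - {la})
        \<union> (sgm k m ` (arcs r (off + al) (g = GS) - {la}) \<union> arcs u k (la \<in> arcs r (off + al) (g = GS)))"
      using Node.IH(2)[OF j1 jr, of "off + al" "g = GS"] sgR sl kj laj
      unfolding m_def by simp
    also have "\<dots> = sgm k m ` (arcs (Node g l r) off c - {la}) \<union> arcs u k (la \<in> arcs (Node g l r) off c)"
      using laR lal unfolding R_def al_def ar_def by (auto simp: image_Un)
    finally show ?thesis unfolding k_def la_def m_def .
  qed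
qed




definition E :: "ftree \<Rightarrow> bnc" where "E t = BNC (arity t) (arcs t 1 True) {}"

lemma bcomp_E: assumes "1 \<le> i" "i \<le> arity t"
  shows "bcomp (E t) i (E u) = E (tcomp t i u)"
proof -
  define m where "m = arity u"
  have m1: "1 \<le> m" using arity_pos m_def by auto
  have root: "(1, m + 1) \<in> arcs u 1 True" using arcs_split[of u 1 True] m_def by auto
  have inner: "arcs u 1 True - {(1, m + 1)} = arcs u 1 False"
    using arcs_split[of u 1 True] arcs_noroot[of 1 u] m_def by auto
  have sh: "shift i ` arcs u 1 False = arcs u i False"
  proof -
    have "shift i ` arcs u 1 False = (\<lambda>(a, b). (a + (i - 1), b + (i - 1))) ` arcs u 1 False"
      using assms by (intro image_cong[OF HOL.refl]) (auto simp: shift_def)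
    also have "\<dots> = arcs u i False" using arcs_trans[of "i - 1" u 1 False] assms by simp
    finally show ?thesis .
  qed
  have sg: "(\<lambda>a. (relabel i m (fst a), relabel i m (snd a))) = sgm i m" by (simp add: sgm_def fun_eq_iff)
  have tc: "arcs (tcomp t i u) 1 True = sgm i m ` (arcs t 1 True - {(i, i + 1)})
      \<union> arcs u i ((i, i + 1) \<in> arcs t 1 True)"
    using arcs_tcomp[OF assms, of u 1 True] m_def by simp
  have us: "arcs u i ((i, i + 1) \<in> arcs t 1 True) = arcs u i False \<union>
       (if (i, i + 1) \<in> arcs t 1 True then {(i, i + m)} else {})"
    using m_def by (cases "(i, i + 1) \<in> arcs t 1 True") (simp_all add: arcs_split[of u i True])
  show ?thesis
    unfolding bcomp_def Let_def E_def
    using root inner sh tc us arity_tcomp[OF assms, of u] m_def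
    by (simp add: sgm_def Un_assoc)
qed

lemma ev_E: "ev t = E t"
proof (induction t)
  case Leaf then show ?case by (simp add: E_def unit_bnc_def)
next
  case (Node g l r)
  have G: "gen_val g = E (Node g Leaf Leaf)"
    by (cases g) (auto simp: gen_val_def p_gen_def s_gen_def T_def E_def)
  have "bcomp (gen_val g) 2 (ev r) = E (Node g Leaf r)"
    using bcomp_E[of 2 "Node g Leaf Leaf" r] Node by (simp add: G)
  then have "ev (Node g l r) = bcomp (E (Node g Leaf r)) 1 (E l)" using Node by simp
  also have "\<dots> = E (Node g l r)" using bcomp_E[of 1 "Node g Leaf r" l] arity_pos[of r] by simp
  finally show ?case .
qed

lemma ev_tcomp: "1 \<le> i \<Longrightarrow> i \<le> arity t \<Longrightarrow> ev (tcomp t i u) = bcomp (ev t) i (ev u)"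
  by (simp add: ev_E bcomp_E)

lemma bsize_ev: "bsize (ev t) = arity t" by (simp add: ev_E E_def)

lemma range_sub: "ev t \<in> gen_subop {p_gen, s_gen}"
proof (induction t)
  case Leaf then show ?case by (simp add: gen_unit)
next
  case (Node g l r)
  have G: "gen_val g \<in> gen_subop {p_gen, s_gen}"
    by (cases g) (auto simp: gen_val_def intro: gen_base)
  have b2: "bsize (gen_val g) = 2" by (cases g) (auto simp: gen_val_def p_gen_def s_gen_def T_def)
  have A: "bcomp (gen_val g) 2 (ev r) \<in> gen_subop {p_gen, s_gen}"
    using gen_comp[OF G Node(2), of 2] b2 by simp
  have "bsize (bcomp (gen_val g) 2 (ev r)) \<ge> 1"
    unfolding bcomp_def Let_def using b2 bsize_ev[of r] arity_pos[of r] by simp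
  then show ?case using gen_comp[OF A Node(1), of 1] by simp
qed

lemma sub_range: "C \<in> gen_subop {p_gen, s_gen} \<Longrightarrow> C \<in> range ev"
proof (induction rule: gen_subop.induct)
  case gen_unit then show ?case by (metis ev.simps(1) rangeI)
next
  case (gen_base C)
  have "p_gen = ev (Node GP Leaf Leaf)" "s_gen = ev (Node GS Leaf Leaf)"
    by (simp_all only: ev_E) (auto simp: E_def p_gen_def s_gen_def T_def)
  then show ?case using gen_base by (metis insertE rangeI singletonD)
next
  case (gen_comp C D i)
  then obtain t u where "C = ev t" "D = ev u" by auto
  then show ?case using gen_comp ev_tcomp[of i t u] bsize_ev[of t] by (metis rangeI)
qed

lemma fcong_sound: "fcong t u \<Longrightarrow> ev t = ev u"
proof (induction rule: fcong.induct)
  case rel then show ?case by (auto simp: ev_E E_def gtree_def)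
next
  case (comp t t' u u' i)
  then show ?case using ev_tcomp[of i t u] ev_tcomp[of i t' u'] bsize_ev[of t] bsize_ev[of t']
    by (metis (no_types))
qed auto


fun push :: "ftree \<Rightarrow> ftree \<Rightarrow> ftree" where
  "push (Node GP x y) b = Node GP x (push y b)"
| "push Leaf b = Node GS Leaf b"
| "push (Node GS x y) b = Node GS (Node GS x y) b"

fun norm :: "ftree \<Rightarrow> ftree" where
  "norm Leaf = Leaf"
| "norm (Node GP l r) = Node GP (norm l) (norm r)"
| "norm (Node GS l r) = push (norm l) (norm r)"

fun leftS :: "ftree \<Rightarrow> bool" where
  "leftS Leaf = True"
| "leftS (Node GS l r) = leftS l"
| "leftS (Node GP l r) = False"

fun nrm :: "ftree \<Rightarrow> bool" where
  "nrm Leaf = True"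
| "nrm (Node GP l r) = (nrm l \<and> nrm r)"
| "nrm (Node GS l r) = (nrm l \<and> nrm r \<and> leftS l)"

lemma tcomp_node: "tcomp (tcomp (gtree g) 2 r) 1 l = Node g l r"
  by (simp add: gtree_def)

lemma fcong_node: "fcong l l' \<Longrightarrow> fcong r r' \<Longrightarrow> fcong (Node g l r) (Node g l' r')"
proof -
  assume a: "fcong l l'" "fcong r r'"
  have "fcong (tcomp (gtree g) 2 r) (tcomp (gtree g) 2 r')"
    by (rule fcong.comp[OF fcong.refl a(2)]) (auto simp: gtree_def)
  then have "fcong (tcomp (tcomp (gtree g) 2 r) 1 l) (tcomp (tcomp (gtree g) 2 r') 1 l')"
    by (rule fcong.comp[OF _ a(1)]) (auto simp: gtree_def)
  then show ?thesis by (simp only: tcomp_node)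
qed

lemma fcong_rot: "fcong (Node GS (Node GP x y) z) (Node GP x (Node GS y z))"
proof -
  have r0: "fcong (Node GS (Node GP Leaf Leaf) Leaf) (Node GP Leaf (Node GS Leaf Leaf))"
    using fcong.rel by (simp add: gtree_def)
  have r1: "fcong (Node GS (Node GP x Leaf) Leaf) (Node GP x (Node GS Leaf Leaf))"
    using fcong.comp[OF r0 fcong.refl[of x], of 1] by simp
  have r2: "fcong (Node GS (Node GP x y) Leaf) (Node GP x (Node GS y Leaf))"
    using fcong.comp[OF r1 fcong.refl[of y], of "arity x + 1"] by simp
  have r3: "fcong (Node GS (Node GP x y) z) (Node GP x (Node GS y z))"
    using fcong.comp[OF r2 fcong.refl[of z], of "arity x + arity y + 1"] by simp
  then show ?thesis .
qed

lemma push_cong: "fcong (Node GS a b) (push a b)"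
proof (induction a b rule: push.induct)
  case (1 x y b)
  have "fcong (Node GS (Node GP x y) b) (Node GP x (Node GS y b))" by (rule fcong_rot)
  moreover have "fcong (Node GP x (Node GS y b)) (Node GP x (push y b))"
    by (rule fcong_node[OF fcong.refl 1])
  ultimately show ?case by (simp add: fcong.trans)
qed (auto intro: fcong.refl)

lemma norm_cong: "fcong t (norm t)"
proof (induction t rule: norm.induct)
  case (3 l r)
  have "fcong (Node GS l r) (Node GS (norm l) (norm r))" by (rule fcong_node[OF 3(1) 3(2)])
  then show ?case using push_cong[of "norm l" "norm r"] by (simp add: fcong.trans)
qed (auto intro: fcong.refl fcong_node)

lemma nrm_push: "nrm a \<Longrightarrow> nrm b \<Longrightarrow> nrm (push a b)"
  by (induction a b rule: push.induct) auto

lemma nrm_norm: "nrm (norm t)"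
  by (induction t rule: norm.induct) (auto simp: nrm_push)

lemma leftS_arcs: "leftS t \<Longrightarrow> (off, b) \<notin> arcs t off False"
proof (induction t arbitrary: off b)
  case Leaf then show ?case by simp
next
  case (Node g l r)
  then have g: "g = GS" and ll: "leftS l" by (cases g; auto)+
  have "(off, b) \<notin> arcs r (off + arity l) True"
    using arcs_bounds[of "(off, b)" r "off + arity l" True] arity_pos[of l] by auto
  then show ?case using Node.IH(1)[OF ll] g by simp
qed

lemma arcs_False: "arcs t off False = arcs t off c - {(off, off + arity t)}"
  using arcs_split[of t off c] arcs_noroot[of off t] by auto

lemma arcs_eqF: "arity t = arity u \<Longrightarrow> arcs t off c = arcs u off c \<Longrightarrow> arcs t off False = arcs u off False"
  using arcs_False[of t off c] arcs_False[of u off c] by simp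

lemma split_l: "arcs l off c = {a \<in> arcs (Node g l r) off False. fst a < off + arity l}"
  "arcs r (off + arity l) c' = {a \<in> arcs (Node g l r) off False. off + arity l \<le> fst a}"
  if "c = (g = GP)" "c' = (g = GS)"
  using that arcs_bounds[of _ l off c] arcs_bounds[of _ r "off + arity l" c'] by fastforce+

lemma GP_le: "arcs (Node GP l r) off False = arcs (Node GP l' r') off False \<Longrightarrow> arity l \<le> arity l'"
proof -
  assume eq: "arcs (Node GP l r) off False = arcs (Node GP l' r') off False"
  have m: "(off, off + arity l) \<in> arcs l off True" by (cases l) auto
  have "(off, off + arity l) \<in> arcs l' off True \<or> (off, off + arity l) \<in> arcs r' (off + arity l') False"
    using eq[simplified] m by blast
  then show ?thesis
  proof
    assume "(off, off + arity l) \<in> arcs l' off True"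
    from arcs_bounds[OF this] show ?thesis by simp
  next
    assume "(off, off + arity l) \<in> arcs r' (off + arity l') False"
    from arcs_bounds[OF this] show ?thesis using arity_pos[of l'] by simp
  qed
qed

lemma GS_le: "arcs (Node GS l r) off False = arcs (Node GS l' r') off False \<Longrightarrow>
   arity l + arity r = arity l' + arity r' \<Longrightarrow> arity l' \<le> arity l"
proof -
  assume eq: "arcs (Node GS l r) off False = arcs (Node GS l' r') off False"
    and n: "arity l + arity r = arity l' + arity r'"
  have m: "(off + arity l, off + arity l + arity r) \<in> arcs r (off + arity l) True" by (cases r) auto
  have "(off + arity l, off + arity l + arity r) \<in> arcs l' off False \<or>
     (off + arity l, off + arity l + arity r) \<in> arcs r' (off + arity l') True"
    using eq[simplified] m by blast
  then show ?thesis
  proof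
    assume "(off + arity l, off + arity l + arity r) \<in> arcs l' off False"
    from arcs_bounds[OF this] show ?thesis using n arity_pos[of r'] by simp
  next
    assume "(off + arity l, off + arity l + arity r) \<in> arcs r' (off + arity l') True"
    from arcs_bounds[OF this] show ?thesis by simp
  qed
qed

lemma nrm_inj: "nrm t \<Longrightarrow> nrm u \<Longrightarrow> arity t = arity u \<Longrightarrow> arcs t off False = arcs u off False \<Longrightarrow> t = u"
proof (induction t arbitrary: u off)
  case Leaf
  then show ?case
  proof (cases u)
    case (Node g l r)
    then show ?thesis using Leaf.prems(3) arity_pos[of l] arity_pos[of r] by simp
  qed simp
next
  case (Node g l r)
  obtain g' l' r' where u: "u = Node g' l' r'"
    using Node.prems(3) arity_pos[of l] arity_pos[of r] by (cases u) auto
  have gg: "g = g'"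
  proof (rule ccontr)
    assume ne: "g \<noteq> g'"
    show False
    proof (cases g)
      case GP
      then have g': "g' = GS" using ne by (cases g') auto
      have "(off, off + arity l) \<in> arcs l off True" by (cases l) auto
      then have "(off, off + arity l) \<in> arcs u off False" using Node.prems(4) GP by simp blast
      moreover have "leftS u" using Node.prems(2) u g' by simp
      ultimately show False using leftS_arcs by blast
    next
      case GS
      then have g': "g' = GP" using ne by (cases g') auto
      have "(off, off + arity l') \<in> arcs l' off True" by (cases l') auto
      then have "(off, off + arity l') \<in> arcs (Node g l r) off False" using Node.prems(4) u g' by simp
      moreover have "leftS (Node g l r)" using Node.prems(1) GS by simp
      ultimately show False using leftS_arcs by blast
    qed
  qed
  have eqa: "arcs (Node g l r) off False = arcs (Node g l' r') off False"
    using Node.prems(4) u gg by simp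
  have n: "arity l + arity r = arity l' + arity r'" using Node.prems(3) u by simp
  have al: "arity l = arity l'"
  proof (cases g)
    case GP then show ?thesis using GP_le[of l r off l' r'] GP_le[of l' r' off l r] eqa by simp
  next
    case GS then show ?thesis using GS_le[of l r off l' r'] GS_le[of l' r' off l r] eqa n by simp
  qed
  have ar: "arity r = arity r'" using n al by simp
  have el: "arcs l off (g = GP) = arcs l' off (g = GP)"
  proof -
    have "arcs l off (g = GP) = {a \<in> arcs (Node g l r) off False. fst a < off + arity l}"
      by (rule split_l(1)) auto
    also have "\<dots> = {a \<in> arcs (Node g l' r') off False. fst a < off + arity l'}"
      by (simp only: eqa al)
    also have "\<dots> = arcs l' off (g = GP)"
      by (rule split_l(1)[symmetric]) auto
    finally show ?thesis .
  qed
  have er: "arcs r (off + arity l) (g = GS) = arcs r' (off + arity l) (g = GS)"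
  proof -
    have "arcs r (off + arity l) (g = GS) = {a \<in> arcs (Node g l r) off False. off + arity l \<le> fst a}"
      by (rule split_l(2)) auto
    also have "\<dots> = {a \<in> arcs (Node g l' r') off False. off + arity l' \<le> fst a}"
      by (simp only: eqa al)
    also have "\<dots> = arcs r' (off + arity l') (g = GS)"
      by (rule split_l(2)[symmetric]) auto
    finally show ?thesis using al by simp
  qed
  have nl: "nrm l" "nrm r" "nrm l'" "nrm r'" using Node.prems(1,2) u gg by (cases g; simp)+
  have "l = l'" using Node.IH(1)[OF nl(1) nl(3) al arcs_eqF[OF al el]] .
  moreover have "r = r'" using Node.IH(2)[OF nl(2) nl(4) ar arcs_eqF[OF ar er]] .
  ultimately show ?case using u gg by simp
qed

theorem theorem3p21:
  shows "range ev = gen_subop {p_gen, s_gen} \<and> (\<forall>t u. ev t = ev u \<longleftrightarrow> fcong t u)"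
proof (intro conjI allI)
  show "range ev = gen_subop {p_gen, s_gen}"
    using range_sub sub_range by blast
next
  fix t u
  show "ev t = ev u \<longleftrightarrow> fcong t u"
  proof
    assume e: "ev t = ev u"
    have "ev (norm t) = ev (norm u)"
      using e fcong_sound[OF norm_cong[of t]] fcong_sound[OF norm_cong[of u]] by simp
    then have a: "arity (norm t) = arity (norm u)" and b: "arcs (norm t) 1 True = arcs (norm u) 1 True"
      by (simp_all add: ev_E E_def)
    have "norm t = norm u" using nrm_inj[OF nrm_norm nrm_norm a arcs_eqF[OF a b]] .
    then show "fcong t u" using norm_cong[of t] norm_cong[of u] by (metis fcong.sym fcong.trans)
  next
    assume "fcong t u" then show "ev t = ev u" by (rule fcong_sound)
  qed
qed

end
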